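(* Let $\Delta_{1,1}=\{A=(a_{ij})\in SL_3(\mathfrak{o}) : a_{21}a_{32}-a_{22}a_{31}\neq0\}$. Then $$\Delta_{1,1}=\bigsqcup_{\substack{y_1,y_2,y_3\in Y(\mathfrak{o})\\ y_2,y_3\neq I_2}}\ \bigsqcup_{d\in D(3)}\ \bigsqcup_{u\in U(3)} \varphi_2(y_1^{-1})\,\varphi_1(y_2^{-1})\,\varphi_2(y_3^{-1})\,d\,u\,\Gamma_\infty(3),$$ i.e. $\Delta_{1,1}$ is the union of these sets and they are pairwise disjoint for distinct tuples $(y_1,y_2,y_3,d,u)$.
   Context: Let $\omega=e^{2\pi i/3}$, $\mathfrak{o}=\mathbb{Z}[\omega]$, $\mathfrak{o}^\times$ its unit group. Fix representatives of nonzero elements modulo units ("$c\in(\mathfrak{o}-\{0\})/\mathfrak{o}^\times$") and, for each nonzero $c$, representatives of $\mathfrak{o}/c\mathfrak{o}$ ("$a\in\mathfrak{o}/c\mathfrak{o}$"). $Y(\mathfrak{o})=\{\begin{pmatrix}a&b\\c&d\end{pmatrix}\in SL_2(\mathfrak{o}) : c\in(\mathfrak{o}-\{0\})/\mathfrak{o}^\times,\ a\in\mathfrak{o}/c\mathfrak{o}\}\cup\{I_2\}$. $\Gamma(3)=\{A\in SL_3(\mathfrak{o}):A\equiv I_3\pmod{3\mathfrak{o}}\}$ (entrywise), $\Gamma_\infty(3)$ its subgroup of upper triangular unipotent matrices. $D(3)$: diagonal $\mathrm{diag}(i,j,k)$ with $i,j,k\in\mathfrak{o}$, $ijk=1$.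 $U(3)$: matrices $\begin{pmatrix}1&\alpha&\beta\\&1&\gamma\\&&1\end{pmatrix}$ with $\alpha,\beta,\gamma\in\{0,1,2\}+\{0,1,2\}\omega$. For $y=\begin{pmatrix}a&b\\c&d\end{pmatrix}\in SL_2(\mathfrak{o})$, $\varphi_1(y)=\begin{pmatrix}a&b&0\\c&d&0\\0&0&1\end{pmatrix}$, $\varphi_2(y)=\begin{pmatrix}1&0&0\\0&a&b\\0&c&d\end{pmatrix}$. *)

theory Defs
  imports "HOL-Analysis.Analysis"
begin

text \<open>The ring o = Z[omega], omega = exp(2 pi i/3), realised inside the complex numbers.\<close>

definition omega :: complex where
  "omega = Complex (-1/2) (sqrt 3 / 2)"

definition Eis :: "complex set" where
  "Eis = {of_int a + of_int b * omega | a b. True}"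

definition Eis_units :: "complex set" where
  "Eis_units = {u \<in> Eis. \<exists>v\<in>Eis. u * v = 1}"

definition assoc_reps :: "complex set \<Rightarrow> bool" where
  "assoc_reps C \<longleftrightarrow> C \<subseteq> Eis - {0} \<and>
     (\<forall>x\<in>Eis - {0}. \<exists>!c. c \<in> C \<and> (\<exists>u\<in>Eis_units. x = u * c))"

definition residue_reps :: "complex \<Rightarrow> complex set \<Rightarrow> bool" where
  "residue_reps c A \<longleftrightarrow> A \<subseteq> Eis \<and>
     (\<forall>x\<in>Eis. \<exists>!a. a \<in> A \<and> (\<exists>z\<in>Eis. x - a = c * z))"

definition SL_o :: "(complex^'n^'n) set" where
  "SL_o = {A. (\<forall>i j. A $ i $ j \<in> Eis) \<and> det A = 1}"

definition Ymat :: "complex set \<Rightarrow> (complex \<Rightarrow> complex set) \<Rightarrow> (complex^2^2) set" where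
  "Ymat C R = {y \<in> SL_o. y $ 2 $ 1 \<in> C \<and> y $ 1 $ 1 \<in> R (y $ 2 $ 1)} \<union> {mat 1}"

definition M3 :: "complex \<Rightarrow> complex \<Rightarrow> complex \<Rightarrow> complex \<Rightarrow> complex \<Rightarrow> complex
    \<Rightarrow> complex \<Rightarrow> complex \<Rightarrow> complex \<Rightarrow> complex^3^3" where
  "M3 a11 a12 a13 a21 a22 a23 a31 a32 a33 = (\<chi> i j.
     if i = 1 then (if j = 1 then a11 else if j = 2 then a12 else a13)
     else if i = 2 then (if j = 1 then a21 else if j = 2 then a22 else a23)
     else (if j = 1 then a31 else if j = 2 then a32 else a33))"

definition phi1 :: "complex^2^2 \<Rightarrow> complex^3^3" where
  "phi1 y = M3 (y$1$1) (y$1$2) 0 (y$2$1) (y$2$2) 0 0 0 1"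

definition phi2 :: "complex^2^2 \<Rightarrow> complex^3^3" where
  "phi2 y = M3 1 0 0 0 (y$1$1) (y$1$2) 0 (y$2$1) (y$2$2)"

definition Gamma3 :: "(complex^3^3) set" where
  "Gamma3 = {A \<in> SL_o. \<forall>i j. \<exists>z\<in>Eis. A $ i $ j - (if i = j then 1 else 0) = 3 * z}"

definition Gamma_inf3 :: "(complex^3^3) set" where
  "Gamma_inf3 = {A \<in> Gamma3. A $ 1 $ 1 = 1 \<and> A $ 2 $ 2 = 1 \<and> A $ 3 $ 3 = 1 \<and>
                  A $ 2 $ 1 = 0 \<and> A $ 3 $ 1 = 0 \<and> A $ 3 $ 2 = 0}"

definition D3 :: "(complex^3^3) set" where
  "D3 = {M3 i 0 0 0 j 0 0 0 k | i j k. i \<in> Eis \<and> j \<in> Eis \<and> k \<in> Eis \<and> i * j * k = 1}"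

definition R9 :: "complex set" where
  "R9 = {of_int m + of_int n * omega | m n. m \<in> {0,1,2} \<and> n \<in> {0,1,2}}"

definition U3 :: "(complex^3^3) set" where
  "U3 = {M3 1 \<alpha> \<beta> 0 1 \<gamma> 0 0 1 | \<alpha> \<beta> \<gamma>. \<alpha> \<in> R9 \<and> \<beta> \<in> R9 \<and> \<gamma> \<in> R9}"

definition Delta11 :: "(complex^3^3) set" where
  "Delta11 = {A \<in> SL_o. A $ 2 $ 1 * A $ 3 $ 2 - A $ 2 $ 2 * A $ 3 $ 1 \<noteq> 0}"

definition cell :: "complex^2^2 \<Rightarrow> complex^2^2 \<Rightarrow> complex^2^2 \<Rightarrow> complex^3^3 \<Rightarrow> complex^3^3
    \<Rightarrow> (complex^3^3) set" where
  "cell y1 y2 y3 d u =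
     (\<lambda>g. phi2 (matrix_inv y1) ** phi1 (matrix_inv y2) ** phi2 (matrix_inv y3) ** d ** u ** g)
       ` Gamma_inf3"

definition cell_index :: "complex set \<Rightarrow> (complex \<Rightarrow> complex set) \<Rightarrow>
    ((complex^2^2) \<times> (complex^2^2) \<times> (complex^2^2) \<times> (complex^3^3) \<times> (complex^3^3)) set" where
  "cell_index C R = {(y1, y2, y3, d, u). y1 \<in> Ymat C R \<and> y2 \<in> Ymat C R \<and> y3 \<in> Ymat C R \<and>
      y2 \<noteq> mat 1 \<and> y3 \<noteq> mat 1 \<and> d \<in> D3 \<and> u \<in> U3}"

end

theory Submission
  imports Defs
begin

lemma omega_sq: "omega * omega = -1 - omega"
  by (simp add: omega_def complex_eq_iff field_simps)

lemma Eis_iff: "x \<in> Eis \<longleftrightarrow> (\<exists>a b. x = of_int a + of_int b * omega)"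
  by (auto simp: Eis_def)

lemma Eis_intI: "of_int a + of_int b * omega \<in> Eis"
  by (auto simp: Eis_def)

lemma Eis_add[intro]: "x \<in> Eis \<Longrightarrow> y \<in> Eis \<Longrightarrow> x + y \<in> Eis"
proof -
  assume "x \<in> Eis" "y \<in> Eis"
  then obtain a b c d where "x = of_int a + of_int b * omega" "y = of_int c + of_int d * omega"
    by (auto simp: Eis_def)
  then have "x + y = of_int (a+c) + of_int (b+d) * omega" by (simp add: algebra_simps)
  then show ?thesis using Eis_intI by metis
qed

lemma Eis_minus[intro]: "x \<in> Eis \<Longrightarrow> - x \<in> Eis"
proof -
  assume "x \<in> Eis"
  then obtain a b where "x = of_int a + of_int b * omega"
    by (auto simp: Eis_def)
  then have "- x = of_int (-a) + of_int (-b) * omega" by (simp add: algebra_simps)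
  then show ?thesis using Eis_intI by metis
qed

lemma Eis_diff[intro]: "x \<in> Eis \<Longrightarrow> y \<in> Eis \<Longrightarrow> x - y \<in> Eis"
  using Eis_add[of x "-y"] Eis_minus[of y] by simp

lemma Eis_mult[intro]: "x \<in> Eis \<Longrightarrow> y \<in> Eis \<Longrightarrow> x * y \<in> Eis"
proof -
  assume "x \<in> Eis" "y \<in> Eis"
  then obtain a b c d where xy: "x = of_int a + of_int b * omega" "y = of_int c + of_int d * omega"
    by (auto simp: Eis_def)
  have "x * y = of_int a * of_int c + (of_int a * of_int d + of_int b * of_int c) * omega
      + of_int b * of_int d * (omega * omega)" unfolding xy by (simp add: algebra_simps)
  also have "\<dots> = of_int (a*c - b*d) + of_int (a*d+b*c-b*d) * omega"
    unfolding omega_sq by (simp add: algebra_simps)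
  finally show ?thesis using Eis_intI by metis
qed

lemma Eis_of_int[simp,intro]: "of_int a \<in> Eis"
  using Eis_intI[of a 0] by simp
lemma Eis_0[simp,intro]: "0 \<in> Eis" using Eis_of_int[of 0] by simp
lemma Eis_1[simp,intro]: "1 \<in> Eis" using Eis_of_int[of 1] by simp
lemma Eis_3[simp,intro]: "3 \<in> Eis" using Eis_of_int[of 3] by simp
lemma Eis_omega[simp,intro]: "omega \<in> Eis" using Eis_intI[of 0 1] by simp

lemma cmod_sq: "(cmod (of_real p + of_real q * omega))^2 = p^2 - p*q + q^2"
proof -
  have "of_real p + of_real q * omega = Complex (p - q/2) (q * sqrt 3 / 2)"
    by (simp add: omega_def complex_eq_iff)
  then show ?thesis unfolding cmod_power2 by (simp add: power2_eq_square field_simps)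
qed

lemma Eis_round: "\<exists>q\<in>Eis. cmod (z - q) < 1"
proof -
  define t where "t = Im z * 2 / sqrt 3"
  define s where "s = Re z + t / 2"
  have z: "z = of_real s + of_real t * omega"
    by (simp add: omega_def complex_eq_iff s_def t_def)
  define m where "m = round s"
  define n where "n = round t"
  have "z - (of_int m + of_int n * omega) = of_real (s - m) + of_real (t - n) * omega"
    by (simp add: z algebra_simps)
  then have "(cmod (z - (of_int m + of_int n * omega)))^2 = (s-m)^2 - (s-m)*(t-n) + (t-n)^2"
    using cmod_sq[of "s - m" "t - n"] by (simp only:)
  also have "\<dots> < 1"
  proof -
    have a: "\<bar>s - m\<bar> \<le> 1/2" unfolding m_def using of_int_round_abs_le[of s] by (simp add: abs_minus_commute)
    have b: "\<bar>t - n\<bar> \<le> 1/2" unfolding n_def using of_int_round_abs_le[of t] by (simp add: abs_minus_commute)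
    have "\<bar>(s-m)*(t-n)\<bar> \<le> 1/2 * (1/2)" unfolding abs_mult
      by (rule mult_mono) (use a b in auto)
    moreover have "(s-m)^2 \<le> (1/2)^2" using a by (metis abs_le_square_iff abs_of_nonneg divide_nonneg_nonneg zero_le_one zero_le_numeral abs_le_D1 power2_abs power_mono abs_ge_zero)
    moreover have "(t-n)^2 \<le> (1/2)^2" using b by (metis abs_le_square_iff abs_of_nonneg divide_nonneg_nonneg zero_le_one zero_le_numeral abs_le_D1 power2_abs power_mono abs_ge_zero)
    ultimately show ?thesis by (simp add: power2_eq_square)
  qed
  finally have "cmod (z - (of_int m + of_int n * omega)) < 1"
    by (smt (verit) one_power2 power2_le_imp_le norm_ge_zero)
  then show ?thesis using Eis_intI by blast
qed

lemma M3_entries[simp]: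
  "M3 a11 a12 a13 a21 a22 a23 a31 a32 a33 $ 1 $ 1 = a11"
  "M3 a11 a12 a13 a21 a22 a23 a31 a32 a33 $ 1 $ 2 = a12"
  "M3 a11 a12 a13 a21 a22 a23 a31 a32 a33 $ 1 $ 3 = a13"
  "M3 a11 a12 a13 a21 a22 a23 a31 a32 a33 $ 2 $ 1 = a21"
  "M3 a11 a12 a13 a21 a22 a23 a31 a32 a33 $ 2 $ 2 = a22"
  "M3 a11 a12 a13 a21 a22 a23 a31 a32 a33 $ 2 $ 3 = a23"
  "M3 a11 a12 a13 a21 a22 a23 a31 a32 a33 $ 3 $ 1 = a31"
  "M3 a11 a12 a13 a21 a22 a23 a31 a32 a33 $ 3 $ 2 = a32"
  "M3 a11 a12 a13 a21 a22 a23 a31 a32 a33 $ 3 $ 3 = a33"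
  by (simp_all add: M3_def)

lemma mat3_eq_iff: "(X::'a^3^3) = Y \<longleftrightarrow> X$1$1 = Y$1$1 \<and> X$1$2 = Y$1$2 \<and> X$1$3 = Y$1$3 \<and>
   X$2$1 = Y$2$1 \<and> X$2$2 = Y$2$2 \<and> X$2$3 = Y$2$3 \<and> X$3$1 = Y$3$1 \<and> X$3$2 = Y$3$2 \<and> X$3$3 = Y$3$3"
  by (auto simp: vec_eq_iff forall_3)

lemma mult3_entry: "((X::'a::semiring_1^3^3) ** Y) $ i $ j = X$i$1 * Y$1$j + X$i$2 * Y$2$j + X$i$3 * Y$3$j"
  by (simp add: matrix_matrix_mult_def sum_3)

lemma phi1_entries[simp]:
  "phi1 y $ 1 $ 1 = y$1$1" "phi1 y $ 1 $ 2 = y$1$2" "phi1 y $ 1 $ 3 = 0"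
  "phi1 y $ 2 $ 1 = y$2$1" "phi1 y $ 2 $ 2 = y$2$2" "phi1 y $ 2 $ 3 = 0"
  "phi1 y $ 3 $ 1 = 0" "phi1 y $ 3 $ 2 = 0" "phi1 y $ 3 $ 3 = 1"
  by (simp_all add: phi1_def)

lemma phi2_entries[simp]:
  "phi2 y $ 1 $ 1 = 1" "phi2 y $ 1 $ 2 = 0" "phi2 y $ 1 $ 3 = 0"
  "phi2 y $ 2 $ 1 = 0" "phi2 y $ 2 $ 2 = y$1$1" "phi2 y $ 2 $ 3 = y$1$2"
  "phi2 y $ 3 $ 1 = 0" "phi2 y $ 3 $ 2 = y$2$1" "phi2 y $ 3 $ 3 = y$2$2"
  by (simp_all add: phi2_def)

definition M2 :: "complex \<Rightarrow> complex \<Rightarrow> complex \<Rightarrow> complex \<Rightarrow> complex^2^2" where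
  "M2 a b c d = (\<chi> i j. if i = 1 then (if j = 1 then a else b) else (if j = 1 then c else d))"

lemma M2_entries[simp]:
  "M2 a b c d $ 1 $ 1 = a" "M2 a b c d $ 1 $ 2 = b" "M2 a b c d $ 2 $ 1 = c" "M2 a b c d $ 2 $ 2 = d"
  by (simp_all add: M2_def)

lemma mat2_eq_iff: "(X::'a^2^2) = Y \<longleftrightarrow> X$1$1 = Y$1$1 \<and> X$1$2 = Y$1$2 \<and> X$2$1 = Y$2$1 \<and> X$2$2 = Y$2$2"
  by (auto simp: vec_eq_iff forall_2)

definition inv2 :: "complex^2^2 \<Rightarrow> complex^2^2" where
  "inv2 y = M2 (y$2$2) (-(y$1$2)) (-(y$2$1)) (y$1$1)"

lemma inv2_entries[simp]:
  "inv2 y $ 1 $ 1 = y$2$2" "inv2 y $ 1 $ 2 = -(y$1$2)" "inv2 y $ 2 $ 1 = -(y$2$1)" "inv2 y $ 2 $ 2 = y$1$1"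
  by (simp_all add: inv2_def)

lemma mat1_2[simp]: "(mat 1 :: 'a::zero_neq_one^2^2) $ 1 $ 1 = 1" "(mat 1 :: 'a::zero_neq_one^2^2) $ 1 $ 2 = 0"
  "(mat 1 :: 'a::zero_neq_one^2^2) $ 2 $ 1 = 0" "(mat 1 :: 'a::zero_neq_one^2^2) $ 2 $ 2 = 1"
  by (simp_all add: mat_def)

lemma mat1_3[simp]: "(mat 1 :: 'a::zero_neq_one^3^3) $ 1 $ 1 = 1" "(mat 1 :: 'a::zero_neq_one^3^3) $ 1 $ 2 = 0"
  "(mat 1 :: 'a::zero_neq_one^3^3) $ 1 $ 3 = 0"
  "(mat 1 :: 'a::zero_neq_one^3^3) $ 2 $ 1 = 0" "(mat 1 :: 'a::zero_neq_one^3^3) $ 2 $ 2 = 1"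
  "(mat 1 :: 'a::zero_neq_one^3^3) $ 2 $ 3 = 0"
  "(mat 1 :: 'a::zero_neq_one^3^3) $ 3 $ 1 = 0" "(mat 1 :: 'a::zero_neq_one^3^3) $ 3 $ 2 = 0"
  "(mat 1 :: 'a::zero_neq_one^3^3) $ 3 $ 3 = 1"
  by (simp_all add: mat_def)

lemma mult2_entry: "((X::'a::semiring_1^2^2) ** Y) $ i $ j = X$i$1 * Y$1$j + X$i$2 * Y$2$j"
  by (simp add: matrix_matrix_mult_def sum_2)

lemma inv2_right: "det y = 1 \<Longrightarrow> y ** inv2 y = mat 1"
  by (simp add: mat2_eq_iff mult2_entry det_2 algebra_simps)
lemma inv2_left: "det y = 1 \<Longrightarrow> inv2 y ** y = mat 1"
  by (simp add: mat2_eq_iff mult2_entry det_2 algebra_simps)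

lemma matrix_inv_eq: "det y = 1 \<Longrightarrow> matrix_inv y = inv2 y"
proof -
  assume d: "det y = 1"
  let ?P = "\<lambda>B. y ** B = mat 1 \<and> B ** y = mat 1"
  have "?P (inv2 y)" using inv2_right[OF d] inv2_left[OF d] by simp
  then have "?P (matrix_inv y)" unfolding matrix_inv_def by (rule someI)
  then have "matrix_inv y = (inv2 y ** y) ** matrix_inv y"
    using inv2_left[OF d] by (simp)
  also have "\<dots> = inv2 y" using \<open>?P (matrix_inv y)\<close>
    by (metis matrix_mul_assoc matrix_mul_rid)
  finally show ?thesis .
qed

lemma det2_inv2: "det (inv2 y) = det y" by (simp add: det_2 algebra_simps)

lemma phi2_inv: "det y = 1 \<Longrightarrow> phi2 y ** phi2 (inv2 y) = mat 1"
  by (simp add: mat3_eq_iff mult3_entry det_2 algebra_simps)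
lemma phi2_inv': "det y = 1 \<Longrightarrow> phi2 (inv2 y) ** phi2 y = mat 1"
  by (simp add: mat3_eq_iff mult3_entry det_2 algebra_simps)
lemma phi1_inv: "det y = 1 \<Longrightarrow> phi1 y ** phi1 (inv2 y) = mat 1"
  by (simp add: mat3_eq_iff mult3_entry det_2 algebra_simps)
lemma phi1_inv': "det y = 1 \<Longrightarrow> phi1 (inv2 y) ** phi1 y = mat 1"
  by (simp add: mat3_eq_iff mult3_entry det_2 algebra_simps)

lemma det_phi1: "det (phi1 y) = det y" by (simp add: det_3 det_2)
lemma det_phi2: "det (phi2 y) = det y" by (simp add: det_3 det_2 algebra_simps)

definition minor :: "complex^3^3 \<Rightarrow> complex" where
  "minor X = X$2$1 * X$3$2 - X$2$2 * X$3$1"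

lemma minor_phi2: "minor (phi2 y ** X) = det y * minor X"
  by (simp add: minor_def mult3_entry det_2 algebra_simps)

lemma Eis_norm_nat: "x \<in> Eis \<Longrightarrow> \<exists>n::nat. (cmod x)^2 = real n"
proof -
  assume "x \<in> Eis"
  then obtain a b where x: "x = of_int a + of_int b * omega" by (auto simp: Eis_def)
  have "x = of_real (real_of_int a) + of_real (real_of_int b) * omega" by (simp add: x)
  then have "(cmod x)^2 = (real_of_int a)^2 - real_of_int a * real_of_int b + (real_of_int b)^2"
    using cmod_sq[of "real_of_int a" "real_of_int b"] by (simp only:)
  then have e: "(cmod x)^2 = real_of_int (a^2 - a*b + b^2)" by simp
  have "4*(a^2 - a*b + b^2) = (2*a-b)^2 + 3*b^2" by (simp add: algebra_simps power2_eq_square)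
  moreover have "(2*a-b)^2 + 3*b^2 \<ge> 0" by simp
  ultimately have "0 \<le> 4*(a^2 - a*b + b^2)" by (simp only:)
  then have "a^2 - a*b + b^2 \<ge> 0" by simp
  then have "real_of_int (a^2 - a*b + b^2) = real (nat (a^2 - a*b + b^2))" by simp
  then show ?thesis using e by metis
qed

definition bez :: "complex \<Rightarrow> complex \<Rightarrow> bool" where
  "bez x y \<longleftrightarrow> (\<exists>g s t. g\<in>Eis \<and> s\<in>Eis \<and> t \<in> Eis \<and> g = s*x + t*y \<and> (\<exists>x'\<in>Eis. x = g*x') \<and> (\<exists>y'\<in>Eis. y = g*y'))"

lemma bezout_aux: "\<forall>x y. x \<in> Eis \<longrightarrow> y \<in> Eis \<longrightarrow> (cmod y)^2 = real n \<longrightarrow> bez x y"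
proof (induction n rule: less_induct)
  case (less n)
  show ?case
  proof (intro allI impI)
    fix x y assume x: "x \<in> Eis" and y: "y \<in> Eis" and n: "(cmod y)^2 = real n"
    show "bez x y"
    proof (cases "y = 0")
      case True
      have "\<exists>x'\<in>Eis. x = x*x'" using Eis_1 by (metis mult_1_right)
      moreover have "\<exists>y'\<in>Eis. y = x*y'" using Eis_0 True by (metis mult_zero_right)
      ultimately show ?thesis unfolding bez_def using x True
        by (intro exI[of _ x] exI[of _ 1] exI[of _ 0]) simp
    next
      case False
      obtain q where q: "q \<in> Eis" "cmod (x/y - q) < 1" using Eis_round by blast
      define r where "r = x - q*y"
      have r: "r \<in> Eis" unfolding r_def using x y q by auto
      have "r = y * (x/y - q)" using False by (simp add: r_def field_simps)
      then have "cmod r = cmod y * cmod (x/y - q)" by (simp add: norm_mult)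
      also have "\<dots> < cmod y" using q False by simp
      finally have lt: "cmod r < cmod y" .
      obtain m where m: "(cmod r)^2 = real m" using Eis_norm_nat[OF r] by blast
      have "(cmod r)^2 < (cmod y)^2" using lt by (simp add: power_strict_mono)
      then have "m < n" using m n by simp
      then have "bez y r" using less.IH y r m by blast
      then obtain g s t y' r' where g: "g\<in>Eis" "s\<in>Eis" "t \<in> Eis" "g = s*y + t*r"
          "y' \<in> Eis" "y = g*y'" "r' \<in> Eis" "r = g*r'"
        unfolding bez_def by blast
      have "x = r + q*y" by (simp add: r_def)
      also have "\<dots> = g*r' + q*(g*y')" using g(6,8) by simp
      also have "\<dots> = g * (q*y' + r')" by (simp add: algebra_simps)
      finally have xg: "x = g * (q*y' + r')" .
      have gg: "g = t*x + (s - t*q)*y" using g(4) unfolding r_def by (simp add: algebra_simps)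
      have e1: "s - t*q \<in> Eis" using g(2,3) q(1) by auto
      have e2: "q*y' + r' \<in> Eis" using g(5,7) q(1) by auto
      have "\<exists>x'\<in>Eis. x = g*x'" using xg e2 by blast
      moreover have "\<exists>y'\<in>Eis. y = g*y'" using g(5,6) by blast
      ultimately show ?thesis unfolding bez_def using g(1,3) e1 gg by blast
    qed
  qed
qed

lemma bezout: "x \<in> Eis \<Longrightarrow> y \<in> Eis \<Longrightarrow> bez x y"
  using bezout_aux Eis_norm_nat by blast

lemma primitive:
  assumes "v1 \<in> Eis" "v2 \<in> Eis" "v2 \<noteq> 0"
  shows "\<exists>a b c d. a \<in> Eis \<and> b \<in> Eis \<and> c \<in> Eis \<and> d \<in> Eis \<and> c * v1 + d * v2 = 0 \<and> a*d - b*c = 1"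
proof -
  obtain g s t x' y' where g: "g\<in>Eis" "s\<in>Eis" "t \<in> Eis" "g = s * v1 + t * v2"
      "x' \<in> Eis" "v1 = g*x'" "y' \<in> Eis" "v2 = g*y'"
    using bezout[OF assms(1,2)] unfolding bez_def by blast
  have "g \<noteq> 0" using g(8) assms(3) by auto
  have "g * (s*x' + t*y') = s*(g*x') + t*(g*y')" by (simp add: algebra_simps)
  also have "\<dots> = s * v1 + t * v2" using g(6,8) by simp
  also have "\<dots> = g * 1" using g(4) by simp
  finally have "g * (s*x' + t*y') = g * 1" .
  then have st: "s*x' + t*y' = 1" using \<open>g \<noteq> 0\<close> by simp
  have e1: "y' * v1 + (-x') * v2 = 0" using g(6,8) by (simp add: algebra_simps)
  have e2: "(-s) * (-x') - (-t) * y' = 1" using st by (simp add: algebra_simps)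
  show ?thesis
    by (rule exI[of _ "-s"], rule exI[of _ "-t"], rule exI[of _ y'], rule exI[of _ "-x'"])
      (use g(2,3,5,7) e1 e2 in \<open>simp add: Eis_minus\<close>)
qed

lemma unit_inv: "u \<in> Eis_units \<Longrightarrow> \<exists>v\<in>Eis. u * v = 1"
  by (simp add: Eis_units_def)

lemma SL2_M2: "a \<in> Eis \<Longrightarrow> b \<in> Eis \<Longrightarrow> c \<in> Eis \<Longrightarrow> d \<in> Eis \<Longrightarrow> a*d - b*c = 1 \<Longrightarrow> M2 a b c d \<in> SL_o"
  by (simp add: SL_o_def det_2 forall_2 )

lemma exists_Y:
  assumes C: "assoc_reps C" and R: "\<forall>c\<in>C. residue_reps c (R c)"
    and v: "v1 \<in> Eis" "v2 \<in> Eis" "v2 \<noteq> 0"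
  shows "\<exists>y\<in>Ymat C R. y \<noteq> mat 1 \<and> y$2$1 * v1 + y$2$2 * v2 = 0"
proof -
  obtain a b c d where abcd: "a \<in> Eis" "b \<in> Eis" "c \<in> Eis" "d \<in> Eis" "c * v1 + d * v2 = 0" "a*d - b*c = 1"
    using primitive[OF v] by blast
  have "c \<noteq> 0" using abcd v by auto
  then obtain c' w where c': "c' \<in> C" "w \<in> Eis_units" "c = w * c'"
    using C abcd unfolding assoc_reps_def by blast
  obtain w' where w': "w' \<in> Eis" "w * w' = 1" using unit_inv[OF c'(2)] by blast
  have wE: "w \<in> Eis" using c'(2) by (simp add: Eis_units_def)
  have c'E: "c' \<in> Eis" "c' \<noteq> 0" using c' C unfolding assoc_reps_def by auto
  define d' where "d' = w' * d"
  define a0 where "a0 = w * a"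
  define b0 where "b0 = w * b"
  have c'eq: "c' = w' * c" using c' w' by (metis mult.assoc mult.commute mult_1)
  have det0: "a0 * d' - b0 * c' = 1"
    unfolding a0_def b0_def d'_def c'eq
    using abcd(6) w'(2) by (simp add: algebra_simps)
  have a0E: "a0 \<in> Eis" unfolding a0_def using wE abcd by auto
  obtain a' z where a': "a' \<in> R c'" "z \<in> Eis" "a0 - a' = c' * z"
    using R c' a0E unfolding residue_reps_def by blast
  have a'E: "a' \<in> Eis" using R c' a' unfolding residue_reps_def by auto
  define b' where "b' = b0 - d' * z"
  have det1: "a' * d' - b' * c' = 1"
  proof -
    have "a0 = c' * z + a'" using a'(3) by (simp add: diff_eq_eq)
    then have "a' = a0 - c' * z" by simp
    moreover have "(a0 - c'*z)*d' - (b0 - d'*z)*c' = a0*d' - b0*c'" by (simp add: algebra_simps)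
    ultimately show ?thesis using det0 unfolding b'_def by metis
  qed
  define y where "y = M2 a' b' c' d'"
  have yS: "y \<in> SL_o" unfolding y_def
  proof (rule SL2_M2)
    show "d' \<in> Eis" unfolding d'_def using w' abcd by auto
    then show "b' \<in> Eis" unfolding b'_def b0_def using wE abcd a' by auto
  qed (use a'E c'E det1 in auto)
  have "y \<in> Ymat C R" using yS c' a' by (simp add: Ymat_def y_def)
  moreover have "y \<noteq> mat 1" using c'E by (auto simp: y_def mat2_eq_iff)
  moreover have "y$2$1 * v1 + y$2$2 * v2 = 0"
  proof -
    have "c' * v1 + (w'*d) * v2 = w' * (c * v1 + d * v2)" unfolding c'eq by (simp add: algebra_simps)
    then show ?thesis using abcd(5) by (simp add: y_def d'_def)
  qed
  ultimately show ?thesis by blast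
qed

lemma mat1_SL: "(mat 1 :: complex^2^2) \<in> SL_o"
  by (simp add: SL_o_def forall_2 det_2)

lemma Ymat_SL: "y \<in> Ymat C R \<Longrightarrow> y \<in> SL_o"
  using mat1_SL by (auto simp: Ymat_def)

lemma Ymat_det: "y \<in> Ymat C R \<Longrightarrow> det y = 1"
  using Ymat_SL by (auto simp: SL_o_def)

lemma Ymat_c: "assoc_reps C \<Longrightarrow> y \<in> Ymat C R \<Longrightarrow> y \<noteq> mat 1 \<Longrightarrow> y$2$1 \<noteq> 0"
  by (auto simp: Ymat_def assoc_reps_def)

lemma SL_entries: "y \<in> SL_o \<Longrightarrow> y$i$j \<in> Eis"
  by (simp add: SL_o_def)

lemma units_1: "1 \<in> Eis_units" by (auto simp: Eis_units_def intro!: bexI[of _ 1])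

lemma Y_unique:
  assumes C: "assoc_reps C" and R: "\<forall>c\<in>C. residue_reps c (R c)"
    and y: "y \<in> Ymat C R" and y': "y' \<in> Ymat C R"
    and v: "v1 \<noteq> 0 \<or> v2 \<noteq> 0"
    and e: "y$2$1 * v1 + y$2$2 * v2 = 0" and e': "y'$2$1 * v1 + y'$2$2 * v2 = 0"
  shows "y = y'"
proof (cases "y = mat 1")
  case True
  then have "v2 = 0" using e by simp
  then have "v1 \<noteq> 0" using v by simp
  show ?thesis
  proof (rule ccontr)
    assume "y \<noteq> y'"
    then have "y' \<noteq> mat 1" using True by simp
    then have "y'$2$1 \<noteq> 0" using Ymat_c[OF C y'] by simp
    then show False using e' \<open>v2 = 0\<close> \<open>v1 \<noteq> 0\<close> by simp
  qed
next
  case False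
  then have cnz: "y$2$1 \<noteq> 0" using Ymat_c[OF C y] by simp
  have y'ne: "y' \<noteq> mat 1"
  proof
    assume "y' = mat 1"
    then have "v2 = 0" using e' by simp
    then have "v1 \<noteq> 0" using v by simp
    then show False using e \<open>v2 = 0\<close> cnz by simp
  qed
  then have c'nz: "y'$2$1 \<noteq> 0" using Ymat_c[OF C y'] by simp
  have yC: "y$2$1 \<in> C" "y$1$1 \<in> R (y$2$1)" "y \<in> SL_o" using y False by (auto simp: Ymat_def)
  have y'C: "y'$2$1 \<in> C" "y'$1$1 \<in> R (y'$2$1)" "y' \<in> SL_o" using y' y'ne by (auto simp: Ymat_def)
  define a where "a = y$1$1"
  define b where "b = y$1$2"
  define c where "c = y$2$1"
  define d where "d = y$2$2"
  define a' where "a' = y'$1$1"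
  define b' where "b' = y'$1$2"
  define c' where "c' = y'$2$1"
  define d' where "d' = y'$2$2"
  have E: "a \<in> Eis" "b \<in> Eis" "c \<in> Eis" "d \<in> Eis" "a' \<in> Eis" "b' \<in> Eis" "c' \<in> Eis" "d' \<in> Eis"
    using yC(3) y'C(3) by (simp_all add: SL_entries a_def b_def c_def d_def a'_def b'_def c'_def d'_def)
  have det: "a*d - b*c = 1" "a'*d' - b'*c' = 1"
    using yC(3) y'C(3) by (simp_all add: SL_o_def det_2 a_def b_def c_def d_def a'_def b'_def c'_def d'_def)
  have e1: "c * v1 + d * v2 = 0" "c' * v1 + d' * v2 = 0"
    using e e' by (simp_all add: c_def d_def c'_def d'_def)
  have cross: "c' * d = d' * c"
  proof -
    have dv: "d * v2 = - (c * v1)" "d' * v2 = -(c' * v1)" using e1 by (metis add.commute eq_neg_iff_add_eq_0)+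
    have cv: "c * v1 = - (d * v2)" "c' * v1 = -(d' * v2)" using e1 by (metis eq_neg_iff_add_eq_0)+
    have "(c'*d - d'*c) * v2 = c' * (d * v2) - c * (d' * v2)" by (simp add: algebra_simps)
    also have "\<dots> = c' * (- (c * v1)) - c * (-(c' * v1))"
      by (simp only: dv)
    also have "\<dots> = 0" by (simp add: algebra_simps)
    finally have 2: "(c'*d - d'*c) * v2 = 0" .
    have "(c'*d - d'*c) * v1 = d * (c' * v1) - d' * (c * v1)" by (simp add: algebra_simps)
    also have "\<dots> = d * (- (d' * v2)) - d' * (-(d * v2))"
      by (simp only: cv)
    also have "\<dots> = 0" by (simp add: algebra_simps)
    finally have 1: "(c'*d - d'*c) * v1 = 0" .
    from 1 2 v show ?thesis by auto
  qed
  define l where "l = a*d' - b*c'"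
  define m where "m = a'*d - b'*c"
  have lc: "c' = l * c"
  proof -
    have "l * c = a * (c' * d) - b * c' * c" by (simp add: l_def cross algebra_simps)
    also have "\<dots> = c' * (a*d - b*c)" by (simp add: algebra_simps)
    finally show ?thesis using det by simp
  qed
  have mc: "c = m * c'"
  proof -
    have "m * c' = a' * (c' * d) - b' * c * c'" by (simp add: m_def algebra_simps)
    also have "\<dots> = a' * (d' * c) - b' * c * c'" by (simp add: cross)
    also have "\<dots> = c * (a'*d' - b'*c')" by (simp add: algebra_simps)
    finally show ?thesis using det by simp
  qed
  have "c = (m * l) * c" using lc mc by (metis mult.assoc)
  then have ml: "m * l = 1" using cnz unfolding c_def[symmetric] by (metis mult_cancel_right1)
  have lE: "l \<in> Eis" "m \<in> Eis" using E by (auto simp: l_def m_def)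
  have lu: "l \<in> Eis_units" using lE ml by (auto simp: Eis_units_def mult.commute)
  have c'x: "c' \<in> Eis - {0}" using E c'nz c'_def by simp
  have "\<exists>!cc. cc \<in> C \<and> (\<exists>u\<in>Eis_units. c' = u * cc)" using C c'x unfolding assoc_reps_def by blast
  moreover have "c' \<in> C \<and> (\<exists>u\<in>Eis_units. c' = u * c')" using y'C units_1 c'_def by force
  moreover have "c \<in> C \<and> (\<exists>u\<in>Eis_units. c' = u * c)" using yC lu lc c_def by blast
  ultimately have cc: "c = c'" by blast
  then have "l = 1" using lc cnz c_def by (metis mult_cancel_right2)
  then have dd: "d = d'"
  proof -
    have "l * d = a * (d' * d) - b * (c' * d)" by (simp add: l_def algebra_simps)
    also have "\<dots> = a * (d' * d) - b * (d' * c)" by (simp add: cross)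
    also have "\<dots> = d' * (a*d - b*c)" by (simp add: algebra_simps)
    finally show ?thesis using det \<open>l = 1\<close> by simp
  qed
  have ab: "(a - a') * d = (b - b') * c" using det cc dd by (simp add: algebra_simps)
  have "a - a' = (a - a') * (a*d - b*c)" using det by simp
  also have "\<dots> = a * ((a - a') * d) - (a - a') * b * c" by (simp add: algebra_simps)
  also have "\<dots> = c * (a * (b - b') - (a - a') * b)" unfolding ab by (simp add: algebra_simps)
  finally have aa0: "a - a' = c * (a * (b - b') - (a - a') * b)" .
  have zE: "a * (b - b') - (a - a') * b \<in> Eis" using E by auto
  have RR: "residue_reps c (R c)" using R yC c_def by simp
  have "a \<in> R c" "a' \<in> R c" using yC y'C cc by (simp_all add: a_def c_def a'_def c'_def)
  moreover have "\<exists>!r. r \<in> R c \<and> (\<exists>z\<in>Eis. a - r = c * z)" using RR E unfolding residue_reps_def by blast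
  moreover have "a - a = c * 0" by simp
  ultimately have aa: "a = a'" using aa0 zE by blast
  then have "(b - b') * c = 0" using ab by simp
  then have bb: "b = b'" using cnz c_def by simp
  show ?thesis using aa bb cc dd
    by (simp add: mat2_eq_iff a_def b_def c_def d_def a'_def b'_def c'_def d'_def)
qed

lemma Eis_indep:
  assumes "of_int a + of_int b * omega = (of_int c + of_int d * omega :: complex)"
  shows "a = c \<and> b = d"
proof -
  have "Im (of_int a + of_int b * omega) = Im (of_int c + of_int d * omega :: complex)" using assms by simp
  then have "b = d" by (simp add: omega_def)
  then show ?thesis using assms by simp
qed

lemma R9_Eis: "r \<in> R9 \<Longrightarrow> r \<in> Eis"
  by (auto simp: R9_def Eis_def)

lemma R9_exists: "z \<in> Eis \<Longrightarrow> \<exists>r\<in>R9. \<exists>w\<in>Eis. z - r = 3 * w"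
proof -
  assume "z \<in> Eis"
  then obtain m n where z: "z = of_int m + of_int n * omega" by (auto simp: Eis_def)
  define r where "r = of_int (m mod 3) + of_int (n mod 3) * (omega::complex)"
  define w where "w = of_int (m div 3) + of_int (n div 3) * (omega::complex)"
  have "m mod 3 \<in> {0,1,2}" "n mod 3 \<in> {0,1,2}" by auto
  then have "r \<in> R9" unfolding R9_def r_def mem_Collect_eq
    by (intro exI[of _ "m mod 3"] exI[of _ "n mod 3"]) simp
  moreover have "w \<in> Eis" unfolding w_def by (rule Eis_intI)
  moreover have "z - r = 3 * w"
  proof -
    have "m = 3 * (m div 3) + m mod 3" "n = 3 * (n div 3) + n mod 3" by simp_all
    then have "(of_int m :: complex) = 3 * of_int (m div 3) + of_int (m mod 3)"
         "(of_int n :: complex) = 3 * of_int (n div 3) + of_int (n mod 3)"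
      by (metis of_int_add of_int_mult of_int_numeral)+
    then show ?thesis unfolding z r_def w_def by (simp add: algebra_simps)
  qed
  ultimately show ?thesis by blast
qed

lemma R9_unique:
  assumes "r \<in> R9" "r' \<in> R9" "w \<in> Eis" "r - r' = 3 * w"
  shows "r = r'"
proof -
  obtain m n where r: "r = of_int m + of_int n * omega" "m \<in> {0,1,2}" "n \<in> {0,1,2}"
    using assms(1) by (auto simp: R9_def)
  obtain m' n' where r': "r' = of_int m' + of_int n' * omega" "m' \<in> {0,1,2}" "n' \<in> {0,1,2}"
    using assms(2) by (auto simp: R9_def)
  obtain p q where w: "w = of_int p + of_int q * omega" using assms(3) by (auto simp: Eis_def)
  have "of_int (m - m') + of_int (n - n') * omega = (of_int (3*p) + of_int (3*q) * omega :: complex)"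
    using assms(4) unfolding r r' w by (simp add: algebra_simps)
  then have "m - m' = 3*p" "n - n' = 3*q" using Eis_indep by blast+
  moreover have "0 \<le> m" "m \<le> 2" "0 \<le> m'" "m' \<le> 2" "0 \<le> n" "n \<le> 2" "0 \<le> n'" "n' \<le> 2"
    using r(2,3) r'(2,3) by auto
  ultimately have "m = m'" "n = n'" by presburger+
  then show ?thesis using r r' by simp
qed

definition GM :: "complex \<Rightarrow> complex \<Rightarrow> complex \<Rightarrow> complex^3^3" where
  "GM a b c = M3 1 (3*a) (3*b) 0 1 (3*c) 0 0 1"

lemma Gi_form: "g \<in> Gamma_inf3 \<Longrightarrow> \<exists>a b c. a \<in> Eis \<and> b \<in> Eis \<and> c \<in> Eis \<and> g = GM a b c"
proof -
  assume g: "g \<in> Gamma_inf3"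
  then have G: "\<forall>i j. \<exists>z\<in>Eis. g $ i $ j - (if i = j then 1 else 0) = 3 * z"
    and d: "g$1$1 = 1" "g$2$2 = 1" "g$3$3 = 1" "g$2$1 = 0" "g$3$1 = 0" "g$3$2 = 0"
    by (auto simp: Gamma_inf3_def Gamma3_def)
  obtain a where a: "a \<in> Eis" "g$1$2 = 3 * a" using G[rule_format, of 1 2] by auto
  obtain b where b: "b \<in> Eis" "g$1$3 = 3 * b" using G[rule_format, of 1 3] by auto
  obtain c where c: "c \<in> Eis" "g$2$3 = 3 * c" using G[rule_format, of 2 3] by auto
  have "g = GM a b c" unfolding GM_def mat3_eq_iff using a b c d by simp
  then show ?thesis using a b c by blast
qed

lemma Gi_intro: "a \<in> Eis \<Longrightarrow> b \<in> Eis \<Longrightarrow> c \<in> Eis \<Longrightarrow> GM a b c \<in> Gamma_inf3"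
proof -
  assume E: "a \<in> Eis" "b \<in> Eis" "c \<in> Eis"
  have "GM a b c \<in> SL_o" unfolding SL_o_def GM_def
    using E by (simp add: forall_3 det_3 Eis_mult)
  moreover have "\<forall>i j. \<exists>z\<in>Eis. GM a b c $ i $ j - (if i = j then 1 else 0) = 3 * z"
    unfolding GM_def forall_3 using E by (auto intro!: bexI[of _ 0])
  ultimately show ?thesis by (simp add: Gamma_inf3_def Gamma3_def GM_def)
qed

definition DM :: "complex \<Rightarrow> complex \<Rightarrow> complex \<Rightarrow> complex^3^3" where
  "DM i j k = M3 i 0 0 0 j 0 0 0 k"

definition UM :: "complex \<Rightarrow> complex \<Rightarrow> complex \<Rightarrow> complex^3^3" where
  "UM x y z = M3 1 x y 0 1 z 0 0 1"

lemma D3_form: "d \<in> D3 \<Longrightarrow> \<exists>i j k. i \<in> Eis \<and> j \<in> Eis \<and> k \<in> Eis \<and> i*j*k = 1 \<and> d = DM i j k"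
  by (auto simp: D3_def DM_def)

lemma U3_form: "u \<in> U3 \<Longrightarrow> \<exists>x y z. x \<in> R9 \<and> y \<in> R9 \<and> z \<in> R9 \<and> u = UM x y z"
  by (auto simp: U3_def UM_def)

lemma DUG: "DM i j k ** UM x y z ** GM a b c =
   M3 i (i*(x + 3*a)) (i*(y + x*(3*c) + 3*b)) 0 j (j*(z + 3*c)) 0 0 k"
  by (simp add: mat3_eq_iff mult3_entry DM_def UM_def GM_def algebra_simps)

definition upper :: "complex^3^3 \<Rightarrow> bool" where
  "upper X \<longleftrightarrow> X$2$1 = 0 \<and> X$3$1 = 0 \<and> X$3$2 = 0"

lemma DUG_props:
  assumes "d \<in> D3" "u \<in> U3" "g \<in> Gamma_inf3"
  shows "d ** u ** g \<in> SL_o" "upper (d ** u ** g)" "(d ** u ** g)$1$1 \<noteq> 0" "(d ** u ** g)$2$2 \<noteq> 0"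
proof -
  obtain i j k where d: "i \<in> Eis" "j \<in> Eis" "k \<in> Eis" "i*j*k = 1" "d = DM i j k" using D3_form[OF assms(1)] by blast
  obtain x y z where u: "x \<in> R9" "y \<in> R9" "z \<in> R9" "u = UM x y z" using U3_form[OF assms(2)] by blast
  obtain a b c where g: "a \<in> Eis" "b \<in> Eis" "c \<in> Eis" "g = GM a b c" using Gi_form[OF assms(3)] by blast
  have E: "x \<in> Eis" "y \<in> Eis" "z \<in> Eis" using u R9_Eis by auto
  have eq: "d ** u ** g = M3 i (i*(x + 3*a)) (i*(y + x*(3*c) + 3*b)) 0 j (j*(z + 3*c)) 0 0 k"
    using d u g DUG by simp
  show "d ** u ** g \<in> SL_o" unfolding eq SL_o_def forall_3 using d g E
    by (simp add: det_3 Eis_add Eis_mult)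
  show "upper (d ** u ** g)" unfolding eq upper_def by simp
  show "(d ** u ** g)$1$1 \<noteq> 0" "(d ** u ** g)$2$2 \<noteq> 0" unfolding eq using d(4) by auto
qed

lemma DUG_unique:
  assumes "d \<in> D3" "u \<in> U3" "g \<in> Gamma_inf3" "d' \<in> D3" "u' \<in> U3" "g' \<in> Gamma_inf3"
    and eq: "d ** u ** g = d' ** u' ** g'"
  shows "d = d' \<and> u = u'"
proof -
  obtain i j k where d: "i \<in> Eis" "j \<in> Eis" "k \<in> Eis" "i*j*k = 1" "d = DM i j k" using D3_form[OF assms(1)] by blast
  obtain x y z where u: "x \<in> R9" "y \<in> R9" "z \<in> R9" "u = UM x y z" using U3_form[OF assms(2)] by blast
  obtain a b c where g: "a \<in> Eis" "b \<in> Eis" "c \<in> Eis" "g = GM a b c" using Gi_form[OF assms(3)] by blast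
  obtain i' j' k' where d': "i' \<in> Eis" "j' \<in> Eis" "k' \<in> Eis" "i'*j'*k' = 1" "d' = DM i' j' k'" using D3_form[OF assms(4)] by blast
  obtain x' y' z' where u': "x' \<in> R9" "y' \<in> R9" "z' \<in> R9" "u' = UM x' y' z'" using U3_form[OF assms(5)] by blast
  obtain a' b' c' where g': "a' \<in> Eis" "b' \<in> Eis" "c' \<in> Eis" "g' = GM a' b' c'" using Gi_form[OF assms(6)] by blast
  have H: "M3 i (i*(x + 3*a)) (i*(y + x*(3*c) + 3*b)) 0 j (j*(z + 3*c)) 0 0 k =
        M3 i' (i'*(x' + 3*a')) (i'*(y' + x'*(3*c') + 3*b')) 0 j' (j'*(z' + 3*c')) 0 0 k'"
    using eq d u g d' u' g' DUG by simp
  have e: "i = i'" "j = j'" "k = k'" "i*(x + 3*a) = i'*(x' + 3*a')"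
     "i*(y + x*(3*c) + 3*b) = i'*(y' + x'*(3*c') + 3*b')" "j*(z + 3*c) = j'*(z' + 3*c')"
    using arg_cong[OF H, of "\<lambda>X. X$1$1"] arg_cong[OF H, of "\<lambda>X. X$2$2"] arg_cong[OF H, of "\<lambda>X. X$3$3"]
      arg_cong[OF H, of "\<lambda>X. X$1$2"] arg_cong[OF H, of "\<lambda>X. X$1$3"] arg_cong[OF H, of "\<lambda>X. X$2$3"]
    by (simp_all only: M3_entries)
  have inz: "i \<noteq> 0" "j \<noteq> 0" using d(4) by auto
  have e1: "x + 3*a = x' + 3*a'" using e(1,4) inz by simp
  have e2: "z + 3*c = z' + 3*c'" using e(2,6) inz by simp
  have e3: "y + x*(3*c) + 3*b = y' + x'*(3*c') + 3*b'" using e(1,5) inz by simp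
  have "x - x' = 3 * (a' - a)" using e1 by (simp add: algebra_simps)
  moreover have "a' - a \<in> Eis" using g g' by auto
  ultimately have xx: "x = x'" using R9_unique[OF u(1) u'(1)] by blast
  have "z - z' = 3 * (c' - c)" using e2 by (simp add: algebra_simps)
  moreover have "c' - c \<in> Eis" using g g' by auto
  ultimately have zz: "z = z'" using R9_unique[OF u(3) u'(3)] by blast
  have cc: "c = c'" using e2 zz by simp
  have "y - y' = 3 * (b' - b)" using e3 xx cc by (simp add: algebra_simps)
  moreover have "b' - b \<in> Eis" using g g' by auto
  ultimately have yy: "y = y'" using R9_unique[OF u(2) u'(2)] by blast
  show ?thesis using d d' u u' e xx yy zz by simp
qed

lemma upper_decomp:
  assumes X: "X \<in> SL_o" "upper X"
  shows "\<exists>d\<in>D3. \<exists>u\<in>U3. \<exists>g\<in>Gamma_inf3. X = d ** u ** g"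
proof -
  define i where "i = X$1$1"
  define j where "j = X$2$2"
  define k where "k = X$3$3"
  have E: "\<And>p q. X$p$q \<in> Eis" using X by (simp add: SL_o_def)
  have ijk: "i*j*k = 1" using X unfolding i_def j_def k_def upper_def SL_o_def by (simp add: det_3)
  define x where "x = X$1$2 * (j*k)"
  define y0 where "y0 = X$1$3 * (j*k)"
  define z where "z = X$2$3 * (i*k)"
  have xE: "x \<in> Eis" "y0 \<in> Eis" "z \<in> Eis" unfolding x_def y0_def z_def using E
    by (simp_all add: Eis_mult i_def j_def k_def)
  obtain \<alpha> a where \<alpha>: "\<alpha> \<in> R9" "a \<in> Eis" "x - \<alpha> = 3 * a" using R9_exists[OF xE(1)] by blast
  obtain \<gamma> c where \<gamma>: "\<gamma> \<in> R9" "c \<in> Eis" "z - \<gamma> = 3 * c" using R9_exists[OF xE(3)] by blast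
  have "y0 - \<alpha> * (3*c) \<in> Eis" using xE \<alpha> \<gamma> R9_Eis by auto
  then obtain \<beta> b where \<beta>: "\<beta> \<in> R9" "b \<in> Eis" "y0 - \<alpha> * (3*c) - \<beta> = 3 * b" using R9_exists by blast
  have dD: "DM i j k \<in> D3" using ijk E unfolding D3_def DM_def i_def j_def k_def by blast
  have uU: "UM \<alpha> \<beta> \<gamma> \<in> U3" using \<alpha> \<beta> \<gamma> unfolding U3_def UM_def by blast
  have gG: "GM a b c \<in> Gamma_inf3" using \<alpha> \<beta> \<gamma> by (simp add: Gi_intro)
  have x1: "\<alpha> + 3*a = x" unfolding \<alpha>(3)[symmetric] by simp
  have x2: "\<gamma> + 3*c = z" unfolding \<gamma>(3)[symmetric] by simp
  have x3: "\<beta> + \<alpha>*(3*c) + 3*b = y0" unfolding \<beta>(3)[symmetric] by simp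
  have "DM i j k ** UM \<alpha> \<beta> \<gamma> ** GM a b c = M3 i (i*x) (i*y0) 0 j (j*z) 0 0 k"
    unfolding DUG x1 x2 x3 by simp
  also have "\<dots> = X"
  proof -
    have "i*x = X$1$2" "i*y0 = X$1$3" unfolding x_def y0_def using ijk
      by (simp_all add: mult.assoc[symmetric])
    moreover have "j*z = X$2$3" unfolding z_def using ijk
      by (metis mult.assoc mult.commute mult_1_right)
    ultimately show ?thesis using X(2) unfolding mat3_eq_iff upper_def i_def j_def k_def by simp
  qed
  finally show ?thesis using dD uU gG by metis
qed

lemma SL3_mult: "A \<in> SL_o \<Longrightarrow> B \<in> SL_o \<Longrightarrow> (A ** B :: complex^3^3) \<in> SL_o"
  unfolding SL_o_def by (simp add: mult3_entry det_mul Eis_add Eis_mult)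

lemma inv2_SL: "(y::complex^2^2) \<in> SL_o \<Longrightarrow> inv2 y \<in> SL_o"
  unfolding SL_o_def by (simp add: forall_2 det2_inv2 Eis_minus)

lemma phi2_SL: "y \<in> SL_o \<Longrightarrow> phi2 y \<in> SL_o"
  unfolding SL_o_def by (simp add: forall_3 det_phi2)

lemma phi1_SL: "y \<in> SL_o \<Longrightarrow> phi1 y \<in> SL_o"
  unfolding SL_o_def by (simp add: forall_3 det_phi1)

lemma SL_det: "X \<in> SL_o \<Longrightarrow> det X = 1" by (simp add: SL_o_def)

definition Pm :: "complex^2^2 \<Rightarrow> complex^2^2 \<Rightarrow> complex^2^2 \<Rightarrow> complex^3^3 \<Rightarrow> complex^3^3" where
  "Pm y1 y2 y3 B = phi2 (inv2 y1) ** (phi1 (inv2 y2) ** (phi2 (inv2 y3) ** B))"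

lemma cell_eq:
  assumes "det y1 = 1" "det y2 = 1" "det y3 = 1"
  shows "cell y1 y2 y3 d u = (\<lambda>g. Pm y1 y2 y3 (d ** u ** g)) ` Gamma_inf3"
  unfolding cell_def Pm_def matrix_inv_eq[OF assms(1)] matrix_inv_eq[OF assms(2)] matrix_inv_eq[OF assms(3)]
  by (simp add: matrix_mul_assoc)

lemma c2: "det y = 1 \<Longrightarrow> phi2 y ** (phi2 (inv2 y) ** X) = X"
  by (metis matrix_mul_assoc phi2_inv matrix_mul_lid)
lemma c1: "det y = 1 \<Longrightarrow> phi1 y ** (phi1 (inv2 y) ** X) = X"
  by (metis matrix_mul_assoc phi1_inv matrix_mul_lid)
lemma c2': "det y = 1 \<Longrightarrow> phi2 (inv2 y) ** (phi2 y ** X) = X"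
  by (metis matrix_mul_assoc phi2_inv' matrix_mul_lid)
lemma c1': "det y = 1 \<Longrightarrow> phi1 (inv2 y) ** (phi1 y ** X) = X"
  by (metis matrix_mul_assoc phi1_inv' matrix_mul_lid)

lemma minor_W: "upper B \<Longrightarrow> minor (phi1 (inv2 y2) ** (phi2 (inv2 y3) ** B)) = y2$2$1 * y3$2$1 * B$1$1 * B$2$2"
  unfolding upper_def minor_def by (simp add: mult3_entry algebra_simps)

lemma Pm_Delta:
  assumes y: "y1 \<in> SL_o" "y2 \<in> SL_o" "y3 \<in> SL_o" and c: "y2$2$1 \<noteq> 0" "y3$2$1 \<noteq> 0"
    and B: "B \<in> SL_o" "upper B" "B$1$1 \<noteq> 0" "B$2$2 \<noteq> 0"
  shows "Pm y1 y2 y3 B \<in> Delta11"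
proof -
  have S: "Pm y1 y2 y3 B \<in> SL_o" unfolding Pm_def
    by (intro SL3_mult phi1_SL phi2_SL inv2_SL y B)
  have "minor (Pm y1 y2 y3 B) = det (inv2 y1) * (y2$2$1 * y3$2$1 * B$1$1 * B$2$2)"
    unfolding Pm_def minor_phi2 minor_W[OF B(2)] ..
  also have "\<dots> \<noteq> 0" using y(1) c B(3,4) by (simp add: det2_inv2 SL_det)
  finally show ?thesis using S by (simp add: Delta11_def minor_def)
qed

lemma mat1_Y: "mat 1 \<in> Ymat C R" by (simp add: Ymat_def)

lemma exists_cell:
  assumes C: "assoc_reps C" and R: "\<forall>c\<in>C. residue_reps c (R c)"
    and A: "A \<in> Delta11"
  shows "\<exists>y1 y2 y3 d u. (y1, y2, y3, d, u) \<in> cell_index C R \<and> A \<in> cell y1 y2 y3 d u"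
proof -
  have AS: "A \<in> SL_o" and Am: "minor A \<noteq> 0" using A by (auto simp: Delta11_def minor_def)
  have AE: "\<And>i j. A$i$j \<in> Eis" using AS by (simp add: SL_o_def)
  obtain y1 where y1: "y1 \<in> Ymat C R" "y1$2$1 * A$2$1 + y1$2$2 * A$3$1 = 0"
  proof (cases "A$3$1 = 0")
    case True
    then show ?thesis using that[OF mat1_Y] by simp
  next
    case False
    then show ?thesis using exists_Y[OF C R AE AE False] that by blast
  qed
  define A1 where "A1 = phi2 y1 ** A"
  have A1S: "A1 \<in> SL_o" unfolding A1_def by (intro SL3_mult phi2_SL Ymat_SL[OF y1(1)] AS)
  have A1E: "\<And>i j. A1$i$j \<in> Eis" using A1S by (simp add: SL_o_def)
  have A131: "A1$3$1 = 0" using y1(2) by (simp add: A1_def mult3_entry)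
  have "minor A1 = minor A" unfolding A1_def minor_phi2 using Ymat_det[OF y1(1)] by simp
  then have "A1$2$1 * A1$3$2 \<noteq> 0" using Am A131 by (simp add: minor_def)
  then have A121: "A1$2$1 \<noteq> 0" and A132: "A1$3$2 \<noteq> 0" by auto
  obtain y2 where y2: "y2 \<in> Ymat C R" "y2 \<noteq> mat 1" "y2$2$1 * A1$1$1 + y2$2$2 * A1$2$1 = 0"
    using exists_Y[OF C R A1E A1E A121] by blast
  define A2 where "A2 = phi1 y2 ** A1"
  have A2S: "A2 \<in> SL_o" unfolding A2_def by (intro SL3_mult phi1_SL Ymat_SL[OF y2(1)] A1S)
  have A2E: "\<And>i j. A2$i$j \<in> Eis" using A2S by (simp add: SL_o_def)
  have A2z: "A2$2$1 = 0" "A2$3$1 = 0" "A2$3$2 = A1$3$2" using y2(3) A131 by (simp_all add: A2_def mult3_entry)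
  have A232: "A2$3$2 \<noteq> 0" using A2z A132 by simp
  obtain y3 where y3: "y3 \<in> Ymat C R" "y3 \<noteq> mat 1" "y3$2$1 * A2$2$2 + y3$2$2 * A2$3$2 = 0"
    using exists_Y[OF C R A2E A2E A232] by blast
  define A3 where "A3 = phi2 y3 ** A2"
  have A3S: "A3 \<in> SL_o" unfolding A3_def by (intro SL3_mult phi2_SL Ymat_SL[OF y3(1)] A2S)
  have A3u: "upper A3" using y3(3) A2z(1,2) by (simp add: A3_def upper_def mult3_entry)
  obtain d u g where dug: "d \<in> D3" "u \<in> U3" "g \<in> Gamma_inf3" "A3 = d ** u ** g"
    using upper_decomp[OF A3S A3u] by blast
  have dets: "det y1 = 1" "det y2 = 1" "det y3 = 1" using Ymat_det y1(1) y2(1) y3(1) by auto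
  have "Pm y1 y2 y3 A3 = A" unfolding Pm_def A3_def A2_def A1_def
    by (simp add: c1' c2' dets)
  then have "A \<in> cell y1 y2 y3 d u" unfolding cell_eq[OF dets] using dug by auto
  moreover have "(y1, y2, y3, d, u) \<in> cell_index C R"
    using y1 y2 y3 dug by (simp add: cell_index_def)
  ultimately show ?thesis by blast
qed

lemma cell_sub:
  assumes C: "assoc_reps C" and t: "(y1, y2, y3, d, u) \<in> cell_index C R"
  shows "cell y1 y2 y3 d u \<subseteq> Delta11"
proof -
  have y: "y1 \<in> Ymat C R" "y2 \<in> Ymat C R" "y3 \<in> Ymat C R" "y2 \<noteq> mat 1" "y3 \<noteq> mat 1" "d \<in> D3" "u \<in> U3"
    using t by (auto simp: cell_index_def)
  have dets: "det y1 = 1" "det y2 = 1" "det y3 = 1" using Ymat_det y by auto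
  show ?thesis unfolding cell_eq[OF dets]
  proof clarify
    fix g assume g: "g \<in> Gamma_inf3"
    show "Pm y1 y2 y3 (d ** u ** g) \<in> Delta11"
      by (rule Pm_Delta) (use Ymat_SL y Ymat_c[OF C] DUG_props[OF y(6,7) g] in auto)
  qed
qed

lemma det3_col: "det (X::complex^3^3) \<noteq> 0 \<Longrightarrow> X$3$1 = 0 \<Longrightarrow> X$1$1 \<noteq> 0 \<or> X$2$1 \<noteq> 0"
  by (auto simp: det_3)

lemma det3_col2: "det (X::complex^3^3) \<noteq> 0 \<Longrightarrow> X$2$1 = 0 \<Longrightarrow> X$3$1 = 0 \<Longrightarrow> X$2$2 \<noteq> 0 \<or> X$3$2 \<noteq> 0"
  by (auto simp: det_3)

lemma cell_disj:
  assumes C: "assoc_reps C" and R: "\<forall>c\<in>C. residue_reps c (R c)"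
    and t: "(y1, y2, y3, d, u) \<in> cell_index C R" and t': "(y1', y2', y3', d', u') \<in> cell_index C R"
    and P: "P \<in> cell y1 y2 y3 d u" "P \<in> cell y1' y2' y3' d' u'"
  shows "(y1, y2, y3, d, u) = (y1', y2', y3', d', u')"
proof -
  have y: "y1 \<in> Ymat C R" "y2 \<in> Ymat C R" "y3 \<in> Ymat C R" "y2 \<noteq> mat 1" "y3 \<noteq> mat 1" "d \<in> D3" "u \<in> U3"
    using t by (auto simp: cell_index_def)
  have y': "y1' \<in> Ymat C R" "y2' \<in> Ymat C R" "y3' \<in> Ymat C R" "y2' \<noteq> mat 1" "y3' \<noteq> mat 1" "d' \<in> D3" "u' \<in> U3"
    using t' by (auto simp: cell_index_def)
  have dets: "det y1 = 1" "det y2 = 1" "det y3 = 1" using Ymat_det y by auto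
  have dets': "det y1' = 1" "det y2' = 1" "det y3' = 1" using Ymat_det y' by auto
  obtain g where g: "g \<in> Gamma_inf3" "P = Pm y1 y2 y3 (d ** u ** g)" using P(1) unfolding cell_eq[OF dets] by blast
  obtain g' where g': "g' \<in> Gamma_inf3" "P = Pm y1' y2' y3' (d' ** u' ** g')" using P(2) unfolding cell_eq[OF dets'] by blast
  define B where "B = d ** u ** g"
  define B' where "B' = d' ** u' ** g'"
  have BP: "B \<in> SL_o" "upper B" using DUG_props[OF y(6,7) g(1)] by (simp_all add: B_def)
  have BP': "B' \<in> SL_o" "upper B'" using DUG_props[OF y'(6,7) g'(1)] by (simp_all add: B'_def)
  have PD: "P \<in> Delta11" using cell_sub[OF C t] P(1) by blast
  then have Pv: "P$2$1 \<noteq> 0 \<or> P$3$1 \<noteq> 0" by (auto simp: Delta11_def)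
  define X where "X = phi1 (inv2 y2) ** (phi2 (inv2 y3) ** B)"
  define X' where "X' = phi1 (inv2 y2') ** (phi2 (inv2 y3') ** B')"
  have PX: "phi2 y1 ** P = X" unfolding g(2) Pm_def X_def B_def by (simp add: c2 dets)
  have PX': "phi2 y1' ** P = X'" unfolding g'(2) Pm_def X'_def B'_def by (simp add: c2 dets')
  have X31: "X$3$1 = 0" using BP(2) by (simp add: X_def upper_def mult3_entry)
  have X31': "X'$3$1 = 0" using BP'(2) by (simp add: X'_def upper_def mult3_entry)
  have e1: "y1$2$1 * P$2$1 + y1$2$2 * P$3$1 = 0" using arg_cong[OF PX, of "\<lambda>M. M$3$1"] X31 by (simp add: mult3_entry)
  have e1': "y1'$2$1 * P$2$1 + y1'$2$2 * P$3$1 = 0" using arg_cong[OF PX', of "\<lambda>M. M$3$1"] X31' by (simp add: mult3_entry)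
  have yy1: "y1 = y1'" using Y_unique[OF C R y(1) y'(1) Pv e1 e1'] .
  have XX: "X = X'" using PX PX' yy1 by simp
  have XS: "X \<in> SL_o" unfolding X_def
    by (intro SL3_mult phi1_SL phi2_SL inv2_SL Ymat_SL[OF y(2)] Ymat_SL[OF y(3)] BP)
  have Xv: "X$1$1 \<noteq> 0 \<or> X$2$1 \<noteq> 0" using det3_col[OF _ X31] SL_det[OF XS] by simp
  define Z where "Z = phi2 (inv2 y3) ** B"
  define Z' where "Z' = phi2 (inv2 y3') ** B'"
  have XZ: "phi1 y2 ** X = Z" unfolding X_def Z_def by (simp add: c1 dets)
  have XZ': "phi1 y2' ** X = Z'" unfolding XX X'_def Z'_def by (simp add: c1 dets')
  have Z21: "Z$2$1 = 0" "Z$3$1 = 0" using BP(2) by (simp_all add: Z_def upper_def mult3_entry)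
  have Z21': "Z'$2$1 = 0" using BP'(2) by (simp add: Z'_def upper_def mult3_entry)
  have e2: "y2$2$1 * X$1$1 + y2$2$2 * X$2$1 = 0" using arg_cong[OF XZ, of "\<lambda>M. M$2$1"] Z21 by (simp add: mult3_entry)
  have e2': "y2'$2$1 * X$1$1 + y2'$2$2 * X$2$1 = 0" using arg_cong[OF XZ', of "\<lambda>M. M$2$1"] Z21' by (simp add: mult3_entry)
  have yy2: "y2 = y2'" using Y_unique[OF C R y(2) y'(2) Xv e2 e2'] .
  have ZZ: "Z = Z'" using XZ XZ' yy2 by simp
  have ZS: "Z \<in> SL_o" unfolding Z_def
    by (intro SL3_mult phi2_SL inv2_SL Ymat_SL[OF y(3)] BP)
  have Zv: "Z$2$2 \<noteq> 0 \<or> Z$3$2 \<noteq> 0" using det3_col2[OF _ Z21] SL_det[OF ZS] by simp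
  have ZB: "phi2 y3 ** Z = B" unfolding Z_def by (simp add: c2 dets)
  have ZB': "phi2 y3' ** Z = B'" unfolding ZZ Z'_def by (simp add: c2 dets')
  have e3: "y3$2$1 * Z$2$2 + y3$2$2 * Z$3$2 = 0" using arg_cong[OF ZB, of "\<lambda>M. M$3$2"] BP(2) by (simp add: mult3_entry upper_def)
  have e3': "y3'$2$1 * Z$2$2 + y3'$2$2 * Z$3$2 = 0" using arg_cong[OF ZB', of "\<lambda>M. M$3$2"] BP'(2) by (simp add: mult3_entry upper_def)
  have yy3: "y3 = y3'" using Y_unique[OF C R y(3) y'(3) Zv e3 e3'] .
  have BB: "d ** u ** g = d' ** u' ** g'" using ZB ZB' yy3 by (simp add: B_def B'_def)
  have "d = d' \<and> u = u'" using DUG_unique[OF y(6,7) g(1) y'(6,7) g'(1) BB] .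
  then show ?thesis using yy1 yy2 yy3 by simp
qed

theorem theorem2p16:
  fixes C :: "complex set" and R :: "complex \<Rightarrow> complex set"
  assumes "assoc_reps C"
    and "\<forall>c\<in>C. residue_reps c (R c)"
  shows "Delta11 = (\<Union>(y1, y2, y3, d, u) \<in> cell_index C R. cell y1 y2 y3 d u) \<and>
         (\<forall>t\<in>cell_index C R. \<forall>t'\<in>cell_index C R. t \<noteq> t' \<longrightarrow>
           (case t of (y1, y2, y3, d, u) \<Rightarrow> cell y1 y2 y3 d u) \<inter>
           (case t' of (y1, y2, y3, d, u) \<Rightarrow> cell y1 y2 y3 d u) = {})"
proof (intro conjI ballI impI)
  show "Delta11 = (\<Union>(y1, y2, y3, d, u) \<in> cell_index C R. cell y1 y2 y3 d u)"
  proof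
    show "Delta11 \<subseteq> (\<Union>(y1, y2, y3, d, u) \<in> cell_index C R. cell y1 y2 y3 d u)"
    proof
      fix A assume "A \<in> Delta11"
      then obtain y1 y2 y3 d u where "(y1, y2, y3, d, u) \<in> cell_index C R" "A \<in> cell y1 y2 y3 d u"
        using exists_cell[OF assms] by blast
      then show "A \<in> (\<Union>(y1, y2, y3, d, u) \<in> cell_index C R. cell y1 y2 y3 d u)" by force
    qed
    show "(\<Union>(y1, y2, y3, d, u) \<in> cell_index C R. cell y1 y2 y3 d u) \<subseteq> Delta11"
      using cell_sub[OF assms(1)] by force
  qed
next
  fix t t' assume t: "t \<in> cell_index C R" and t': "t' \<in> cell_index C R" and ne: "t \<noteq> t'"
  obtain y1 y2 y3 d u where tt: "t = (y1, y2, y3, d, u)" by (cases t) auto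
  obtain y1' y2' y3' d' u' where tt': "t' = (y1', y2', y3', d', u')" by (cases t') auto
  show "(case t of (y1, y2, y3, d, u) \<Rightarrow> cell y1 y2 y3 d u) \<inter>
           (case t' of (y1, y2, y3, d, u) \<Rightarrow> cell y1 y2 y3 d u) = {}"
    using cell_disj[OF assms, of y1 y2 y3 d u y1' y2' y3' d' u'] t t' ne unfolding tt tt' by auto
qed

end
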